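(* Let $H$ be a real or complex Hilbert space of dimension $n$, let $N\ge n$, let $\{q_i\}_{i=1}^N$ be a weight number sequence, and let $F=\{f_i\}_{i=1}^N$ be a probabilistic uniform Parseval frame for $H$. Then its canonical dual is the unique 1-erasure probabilistic optimal dual of $F$, and therefore it is an $m$-erasure probabilistic optimal dual of $F$ for every $m$.
   Context: Inner products are linear in the first argument. A frame $F=\{f_i\}_{i=1}^N$ for $H$ is Parseval if $\sum_i|\langle f,f_i\rangle|^2=\|f\|^2$ for all $f$. A probabilistic uniform Parseval frame is a Parseval frame with $\|f_i\|^2=1/q_i$ for all $i$. Frame operator: $S_F=\Theta_F^*\Theta_F$, where $\Theta_Ff=(\langle f,f_i\rangle)_i$. The canonical dual is $\{S_F^{-1}f_i\}$. A dual of $F$ is a frame $G=\{g_i\}_{i=1}^N$ with $f=\sum_i\langle f,f_i\rangle g_i=\sum_i\langle f,g_i\rangle f_i$ for all $f$. A probability sequence satisfies $0\le p_i\le1$ and $\sum p_i=1$. Weight numbers: $q_i=\frac{\sum_jp_j}{\sum_jp_j-p_i}\cdot\frac{N-1}{n}$ (assumed well defined). For $1\le m\le N$, $\mathcal{D}_m^p$ is the set of $N\times N$ diagonal matrices $D$ for which there is $\Lambda$ with $|\Lambda|=m$, $D_{ii}=q_i$ for $i\in\Lambda$ and $0$ otherwise. $d_m^p(F,G)=\max\{\|\Theta_G^*D\Theta_F\|:D\in\mathcal{D}_m^p\}$ (operator norm), where $\Theta_G^*(c)=\sum_ic_ig_i$. Optimal duals are defined recursively: - $G$ is a 1-erasure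 probabilistic optimal dual of $F$ if $d_1^p(F,G)=\inf\{d_1^p(F,G'):G'\text{ a dual of }F\}$; - for $m\ge2$, $G$ is an $m$-erasure probabilistic optimal dual if it is an $(m-1)$-erasure probabilistic optimal dual and $d_m^p(F,G)=\inf\{d_m^p(F,G'):G'\text{ an }(m-1)\text{-erasure probabilistic optimal dual of }F\}$. *)

theory Defs
  imports "HOL-Analysis.Analysis"
begin

text \<open>The Hilbert space H of dimension n = CARD('n) is modelled (up to isometric
isomorphism) as K^n inside complex^'n, where the scalar field K is either the reals
(K = Reals) or the complex numbers (K = UNIV).  Frames are indexed by {0..<N}.\<close>

definition hspace :: "complex set \<Rightarrow> (complex ^ 'n) set" where
  "hspace K = {x. \<forall>i. x $ i \<in> K}"

definition ip :: "complex ^ 'n \<Rightarrow> complex ^ 'n \<Rightarrow> complex" where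
  "ip x y = (\<Sum>i\<in>UNIV. x $ i * cnj (y $ i))"

definition is_frame :: "complex set \<Rightarrow> nat \<Rightarrow> (nat \<Rightarrow> complex ^ 'n) \<Rightarrow> bool" where
  "is_frame K N F \<longleftrightarrow> (\<forall>i<N. F i \<in> hspace K) \<and>
     (\<exists>A B. 0 < A \<and> A \<le> B \<and> (\<forall>f\<in>hspace K.
        A * (norm f)\<^sup>2 \<le> (\<Sum>i<N. (cmod (ip f (F i)))\<^sup>2) \<and>
        (\<Sum>i<N. (cmod (ip f (F i)))\<^sup>2) \<le> B * (norm f)\<^sup>2))"

definition is_parseval :: "complex set \<Rightarrow> nat \<Rightarrow> (nat \<Rightarrow> complex ^ 'n) \<Rightarrow> bool" where
  "is_parseval K N F \<longleftrightarrow> (\<forall>i<N. F i \<in> hspace K) \<and>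
     (\<forall>f\<in>hspace K. (\<Sum>i<N. (cmod (ip f (F i)))\<^sup>2) = (norm f)\<^sup>2)"

definition prob_seq :: "nat \<Rightarrow> (nat \<Rightarrow> real) \<Rightarrow> bool" where
  "prob_seq N p \<longleftrightarrow> (\<forall>i<N. 0 \<le> p i \<and> p i \<le> 1) \<and> (\<Sum>i<N. p i) = 1"

definition weight :: "nat \<Rightarrow> nat \<Rightarrow> (nat \<Rightarrow> real) \<Rightarrow> nat \<Rightarrow> real" where
  "weight n N p i = (\<Sum>j<N. p j) / ((\<Sum>j<N. p j) - p i) * (real N - 1) / real n"

definition is_prob_uniform_parseval ::
  "complex set \<Rightarrow> nat \<Rightarrow> (nat \<Rightarrow> real) \<Rightarrow> (nat \<Rightarrow> complex ^ 'n) \<Rightarrow> bool" where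
  "is_prob_uniform_parseval K N q F \<longleftrightarrow> is_parseval K N F \<and>
     (\<forall>i<N. (norm (F i))\<^sup>2 = 1 / q i)"

definition frame_op :: "nat \<Rightarrow> (nat \<Rightarrow> complex ^ 'n) \<Rightarrow> complex ^ 'n \<Rightarrow> complex ^ 'n" where
  "frame_op N F f = (\<Sum>i<N. ip f (F i) *s F i)"

definition canonical_dual ::
  "complex set \<Rightarrow> nat \<Rightarrow> (nat \<Rightarrow> complex ^ 'n) \<Rightarrow> nat \<Rightarrow> complex ^ 'n" where
  "canonical_dual K N F i = inv_into (hspace K) (frame_op N F) (F i)"

definition is_dual :: "complex set \<Rightarrow> nat \<Rightarrow> (nat \<Rightarrow> complex ^ 'n) \<Rightarrow> (nat \<Rightarrow> complex ^ 'n) \<Rightarrow> bool" where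
  "is_dual K N F G \<longleftrightarrow> is_frame K N G \<and>
     (\<forall>f\<in>hspace K. f = (\<Sum>i<N. ip f (F i) *s G i) \<and> f = (\<Sum>i<N. ip f (G i) *s F i))"

definition op_norm :: "complex set \<Rightarrow> (complex ^ 'n \<Rightarrow> complex ^ 'n) \<Rightarrow> real" where
  "op_norm K T = Sup {norm (T f) | f. f \<in> hspace K \<and> norm f \<le> 1}"

text \<open>Theta_G^* D Theta_F for D in D_m^p with support Lambda: f maps to
  sum over i in Lambda of q_i <f,f_i> g_i.\<close>
definition erasure_op :: "(nat \<Rightarrow> real) \<Rightarrow> nat set \<Rightarrow> (nat \<Rightarrow> complex ^ 'n) \<Rightarrow> (nat \<Rightarrow> complex ^ 'n)
    \<Rightarrow> complex ^ 'n \<Rightarrow> complex ^ 'n" where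
  "erasure_op q \<Lambda> F G f = (\<Sum>i\<in>\<Lambda>. (complex_of_real (q i) * ip f (F i)) *s G i)"

definition d_erasure :: "complex set \<Rightarrow> nat \<Rightarrow> (nat \<Rightarrow> real) \<Rightarrow> nat \<Rightarrow>
    (nat \<Rightarrow> complex ^ 'n) \<Rightarrow> (nat \<Rightarrow> complex ^ 'n) \<Rightarrow> real" where
  "d_erasure K N q m F G =
     Max {op_norm K (erasure_op q \<Lambda> F G) | \<Lambda>. \<Lambda> \<subseteq> {..<N} \<and> card \<Lambda> = m}"

text \<open>opt_dual K N q m F G: G is an m-erasure probabilistic optimal dual of F
  (for m \<ge> 1); opt_dual ... 0 F G just means G is a dual of F.\<close>
fun opt_dual :: "complex set \<Rightarrow> nat \<Rightarrow> (nat \<Rightarrow> real) \<Rightarrow> nat \<Rightarrow>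
    (nat \<Rightarrow> complex ^ 'n) \<Rightarrow> (nat \<Rightarrow> complex ^ 'n) \<Rightarrow> bool" where
  "opt_dual K N q 0 F G = is_dual K N F G"
| "opt_dual K N q (Suc m) F G = (opt_dual K N q m F G \<and>
     d_erasure K N q (Suc m) F G =
       Inf {d_erasure K N q (Suc m) F G' | G'. opt_dual K N q m F G'})"

end

theory Submission
  imports Defs
begin

lemma inner_ip: "inner x y = Re (ip x y)" for x y :: "complex ^ 'n"
  unfolding inner_vec_def ip_def by (simp add: inner_complex_def Re_sum)

lemma ip_self: "ip x x = complex_of_real ((norm x)\<^sup>2)" for x :: "complex ^ 'n"
proof -
  have "Im (ip x x) = 0" unfolding ip_def by (simp add: Im_sum)
  moreover have "Re (ip x x) = (norm x)\<^sup>2" by (simp add: power2_norm_eq_inner inner_ip)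
  ultimately show ?thesis by (simp add: complex_eq_iff)
qed

lemma ip_cnj: "ip y x = cnj (ip x y)"
  unfolding ip_def by (simp add: mult.commute)

lemma ip_smult: "ip (c *s x) y = c * ip x y"
  unfolding ip_def by (simp add: sum_distrib_left mult.assoc)

lemma ip_add: "ip (x + y) z = ip x z + ip y z"
  unfolding ip_def by (simp add: sum.distrib distrib_right)

lemma ip_diff: "ip (x - y) z = ip x z - ip y z"
  unfolding ip_def by (simp add: sum_subtractf left_diff_distrib)

lemma ip_zero: "ip 0 z = 0"
  unfolding ip_def by simp

lemma ip_sum: "ip (\<Sum>i\<in>A. x i) z = (\<Sum>i\<in>A. ip (x i) z)"
  by (induction A rule: infinite_finite_induct) (auto simp: ip_add ip_zero)

lemma ip_axis: "ip x (axis k 1) = x $ k"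
  unfolding ip_def axis_def by (simp add: if_distrib cong: if_cong)

lemma ip_axis2: "ip (axis k 1) x = cnj (x $ k)"
  by (subst ip_cnj) (simp add: ip_axis)

lemma norm_smult: "norm (c *s x) = cmod c * norm x" for x :: "complex ^ 'n"
proof -
  have "(norm (c *s x))\<^sup>2 = (cmod c * norm x)\<^sup>2"
    unfolding power2_norm_eq_inner power_mult_distrib inner_vec_def
    by (simp add: inner_complex_def sum_distrib_left algebra_simps power2_eq_square cmod_power2)
  thus ?thesis by (simp add: power2_eq_iff_nonneg)
qed

lemma ip_cs: "cmod (ip x y) \<le> norm x * norm y" for x y :: "complex ^ 'n"
proof (cases "ip x y = 0")
  case True thus ?thesis by simp
next
  case False
  define c where "c = cnj (ip x y) / cmod (ip x y)"
  have cm: "cmod c = 1" using False by (simp add: c_def norm_divide)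
  have "ip (c *s x) y = complex_of_real (cmod (ip x y))"
  proof -
    have "ip (c *s x) y = cnj (ip x y) * ip x y / cmod (ip x y)" by (simp add: ip_smult c_def)
    also have "cnj (ip x y) * ip x y = complex_of_real ((cmod (ip x y))\<^sup>2)"
      by (metis complex_norm_square mult.commute)
    finally show ?thesis using False by (simp add: power2_eq_square)
  qed
  hence "cmod (ip x y) = inner (c *s x) y" by (simp add: inner_ip)
  also have "\<dots> \<le> norm (c *s x) * norm y" by (rule Cauchy_Schwarz_ineq2[THEN order_trans[OF abs_ge_self]])
  also have "\<dots> = norm x * norm y" by (simp add: norm_smult cm)
  finally show ?thesis .
qed

lemma norm_axis1: "norm (axis k (1::complex)) = 1"
proof -
  have "complex_of_real ((norm (axis k (1::complex)))\<^sup>2) = 1"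
    by (metis ip_self ip_axis axis_nth)
  hence "(norm (axis k (1::complex)))\<^sup>2 = 1" by (metis of_real_eq_1_iff)
  thus ?thesis by simp
qed

lemma hspace_axis: "K = \<real> \<or> K = UNIV \<Longrightarrow> axis k 1 \<in> hspace K"
  unfolding hspace_def axis_def by auto

lemma hspace_scaleR: "K = \<real> \<or> K = UNIV \<Longrightarrow> x \<in> hspace K \<Longrightarrow> (r::real) *\<^sub>R x \<in> hspace K"
proof -
  have e: "(r *\<^sub>R x)$i = complex_of_real r * x$i" for i
    by (metis vector_scaleR_component scaleR_conv_of_real)
  assume "K = \<real> \<or> K = UNIV" "x \<in> hspace K"
  thus ?thesis unfolding hspace_def by (auto simp del: vector_scaleR_component simp: e Reals_mult)
qed

lemma scaleR_smult: "r *\<^sub>R x = complex_of_real r *s x" for x :: "complex ^ 'n"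
proof -
  have "(r *\<^sub>R x)$i = complex_of_real r * x$i" for i
    by (metis vector_scaleR_component scaleR_conv_of_real)
  thus ?thesis by (simp add: vec_eq_iff del: vector_scaleR_component)
qed

lemma op_norm_rank1:
  fixes a b :: "complex ^ 'n"
  assumes K: "K = \<real> \<or> K = UNIV" and a: "a \<in> hspace K" and c: "c \<ge> 0"
  shows "op_norm K (\<lambda>f. (complex_of_real c * ip f a) *s b) = c * norm a * norm b"
proof -
  let ?S = "{norm ((complex_of_real c * ip f a) *s b) | f. f \<in> hspace K \<and> norm f \<le> 1}"
  have ub: "x \<le> c * norm a * norm b" if xS: "x \<in> ?S" for x
  proof -
    obtain f where f: "f \<in> hspace K" "norm f \<le> 1" and x: "x = norm ((complex_of_real c * ip f a) *s b)"
      using xS by blast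
    have "x = c * cmod (ip f a) * norm b" using c by (simp add: x norm_smult norm_mult)
    also have "\<dots> \<le> c * (norm f * norm a) * norm b"
      using c by (intro mult_right_mono mult_left_mono ip_cs) auto
    also have "\<dots> \<le> c * (1 * norm a) * norm b"
      using c f by (intro mult_right_mono mult_left_mono) auto
    finally show ?thesis by simp
  qed
  have mem: "c * norm a * norm b \<in> ?S"
  proof (cases "a = 0")
    case True
    have "(0::complex^'n) \<in> hspace K" unfolding hspace_def using K by auto
    moreover have "norm ((complex_of_real c * ip 0 a) *s b) = c * norm a * norm b"
      using True by (simp add: ip_zero vec_eq_iff)
    ultimately show ?thesis by force
  next
    case False
    define f where "f = (1 / norm a) *\<^sub>R a"
    have fh: "f \<in> hspace K" unfolding f_def by (rule hspace_scaleR[OF K a])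
    have nf: "norm f = 1" using False by (simp add: f_def)
    have "ip f a = complex_of_real (1 / norm a) * complex_of_real ((norm a)\<^sup>2)"
      by (simp add: f_def scaleR_smult ip_smult ip_self)
    also have "\<dots> = complex_of_real (norm a)" using False by (simp add: power2_eq_square)
    finally have "norm ((complex_of_real c * ip f a) *s b) = c * norm a * norm b"
      using c by (simp add: norm_smult norm_mult)
    thus ?thesis using fh nf by force
  qed
  show ?thesis unfolding op_norm_def
    by (rule cSup_eq_maximum[OF mem]) (use ub in blast)
qed

lemma d1_formula:
  fixes F G :: "nat \<Rightarrow> complex ^ 'n"
  assumes K: "K = \<real> \<or> K = UNIV" and Fh: "\<forall>i<N. F i \<in> hspace K" and q: "\<forall>i<N. q i \<ge> 0"
  shows "d_erasure K N q 1 F G = Max ((\<lambda>i. q i * norm (F i) * norm (G i)) ` {..<N})"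
proof -
  have "{op_norm K (erasure_op q \<Lambda> F G) | \<Lambda>. \<Lambda> \<subseteq> {..<N} \<and> card \<Lambda> = 1}
      = (\<lambda>i. q i * norm (F i) * norm (G i)) ` {..<N}"
  proof (intro set_eqI iffI)
    fix x assume "x \<in> {op_norm K (erasure_op q \<Lambda> F G) | \<Lambda>. \<Lambda> \<subseteq> {..<N} \<and> card \<Lambda> = 1}"
    then obtain \<Lambda> where L: "\<Lambda> \<subseteq> {..<N}" "card \<Lambda> = 1" and x: "x = op_norm K (erasure_op q \<Lambda> F G)"
      by blast
    obtain i where i: "\<Lambda> = {i}" using L(2) card_1_singletonE by blast
    have iN: "i < N" using L(1) i by auto
    have "erasure_op q \<Lambda> F G = (\<lambda>f. (complex_of_real (q i) * ip f (F i)) *s G i)"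
      unfolding erasure_op_def i by simp
    hence "x = q i * norm (F i) * norm (G i)"
      using x op_norm_rank1[OF K, of "F i" "q i" "G i"] Fh q iN by simp
    thus "x \<in> (\<lambda>i. q i * norm (F i) * norm (G i)) ` {..<N}" using iN by blast
  next
    fix x assume "x \<in> (\<lambda>i. q i * norm (F i) * norm (G i)) ` {..<N}"
    then obtain i where iN: "i < N" and x: "x = q i * norm (F i) * norm (G i)" by blast
    have "erasure_op q {i} F G = (\<lambda>f. (complex_of_real (q i) * ip f (F i)) *s G i)"
      unfolding erasure_op_def by simp
    hence "x = op_norm K (erasure_op q {i} F G)"
      using x op_norm_rank1[OF K, of "F i" "q i" "G i"] Fh q iN by simp
    moreover have "{i} \<subseteq> {..<N}" "card {i} = 1" using iN by auto
    ultimately show "x \<in> {op_norm K (erasure_op q \<Lambda> F G) | \<Lambda>. \<Lambda> \<subseteq> {..<N} \<and> card \<Lambda> = 1}"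
      by blast
  qed
  thus ?thesis unfolding d_erasure_def by simp
qed

lemma polar_c: "(cmod (u + v))\<^sup>2 - (cmod (u - v))\<^sup>2 = 4 * Re (u * cnj v)"
  unfolding cmod_power2 by (simp add: algebra_simps power2_eq_square)

lemma polar_v: "(norm (x + y))\<^sup>2 - (norm (x - y))\<^sup>2 = 4 * inner x y" for x y :: "complex ^ 'n"
  by (simp add: power2_norm_eq_inner inner_add inner_diff inner_commute)

lemma hspace_add: "K = \<real> \<or> K = UNIV \<Longrightarrow> x \<in> hspace K \<Longrightarrow> y \<in> hspace K \<Longrightarrow> x + y \<in> hspace K"
  unfolding hspace_def by auto

lemma hspace_diff: "K = \<real> \<or> K = UNIV \<Longrightarrow> x \<in> hspace K \<Longrightarrow> y \<in> hspace K \<Longrightarrow> x - y \<in> hspace K"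
  unfolding hspace_def by auto

lemma frame_op_comp: "frame_op N F f $ k = (\<Sum>i<N. ip f (F i) * F i $ k)"
  unfolding frame_op_def by (simp add: sum_component)

lemma parseval_frame_op:
  fixes F :: "nat \<Rightarrow> complex ^ 'n"
  assumes K: "K = \<real> \<or> K = UNIV" and P: "is_parseval K N F" and f: "f \<in> hspace K"
  shows "frame_op N F f = f"
proof -
  have Fh: "\<forall>i<N. F i \<in> hspace K" and par: "\<forall>f\<in>hspace K. (\<Sum>i<N. (cmod (ip f (F i)))\<^sup>2) = (norm f)\<^sup>2"
    using P unfolding is_parseval_def by auto
  have ipS: "ip (frame_op N F x) g = (\<Sum>i<N. ip x (F i) * cnj (ip g (F i)))" for x g
    unfolding frame_op_def ip_sum by (simp add: ip_smult ip_cnj[of "F _" g])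
  have ReS: "Re (ip (frame_op N F x) g) = Re (ip x g)" if x: "x \<in> hspace K" and g: "g \<in> hspace K" for x g
  proof -
    have "4 * Re (ip (frame_op N F x) g) = (\<Sum>i<N. 4 * Re (ip x (F i) * cnj (ip g (F i))))"
      by (simp add: ipS Re_sum sum_distrib_left)
    also have "\<dots> = (\<Sum>i<N. (cmod (ip (x + g) (F i)))\<^sup>2) - (\<Sum>i<N. (cmod (ip (x - g) (F i)))\<^sup>2)"
      by (simp add: sum_subtractf[symmetric] ip_add ip_diff polar_c)
    also have "\<dots> = (norm (x + g))\<^sup>2 - (norm (x - g))\<^sup>2"
      using par hspace_add[OF K x g] hspace_diff[OF K x g] by simp
    also have "\<dots> = 4 * Re (ip x g)" by (simp add: polar_v inner_ip)
    finally show ?thesis by simp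
  qed
  have Re_eq: "Re (frame_op N F x $ k) = Re (x $ k)" if x: "x \<in> hspace K" for x k
    using ReS[OF x hspace_axis[OF K, of k]] by (simp add: ip_axis)
  have Im_eq: "Im (frame_op N F f $ k) = Im (f $ k)" for k
    using K
  proof
    assume KU: "K = UNIV"
    have "\<i> *s f \<in> hspace K" using KU unfolding hspace_def by simp
    from Re_eq[OF this, of k]
    have "Re (\<i> * frame_op N F f $ k) = Re (\<i> * f $ k)"
      by (simp add: frame_op_comp ip_smult sum_distrib_left mult.assoc)
    thus ?thesis by simp
  next
    assume KR: "K = \<real>"
    have "ip f (F i) * F i $ k \<in> \<real>" if "i < N" for i
    proof -
      have "ip f (F i) \<in> \<real>" unfolding ip_def using f Fh that KR
        by (auto simp: hspace_def intro!: sum_in_Reals Reals_mult simp: Reals_cnj_iff)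
      moreover have "F i $ k \<in> \<real>" using Fh that KR by (auto simp: hspace_def)
      ultimately show ?thesis by (rule Reals_mult)
    qed
    hence "frame_op N F f $ k \<in> \<real>" unfolding frame_op_comp by (auto intro!: sum_in_Reals)
    moreover have "f $ k \<in> \<real>" using f KR by (auto simp: hspace_def)
    ultimately show ?thesis by (simp add: complex_is_Real_iff)
  qed
  show ?thesis using Re_eq[OF f] Im_eq by (simp add: vec_eq_iff complex_eq_iff)
qed

lemma trace_dual:
  fixes F G :: "nat \<Rightarrow> complex ^ 'n"
  assumes K: "K = \<real> \<or> K = UNIV" and D: "is_dual K N F G"
  shows "(\<Sum>i<N. ip (G i) (F i)) = of_nat CARD('n)"
proof -
  have one: "(\<Sum>i<N. cnj (F i $ k) * G i $ k) = 1" for k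
  proof -
    have "axis k 1 = (\<Sum>i<N. ip (axis k 1) (F i) *s G i)"
      using D hspace_axis[OF K] unfolding is_dual_def by blast
    hence "axis k (1::complex) $ k = (\<Sum>i<N. ip (axis k 1) (F i) *s G i) $ k" by simp
    thus ?thesis by (simp add: sum_component ip_axis2)
  qed
  have "(\<Sum>i<N. ip (G i) (F i)) = (\<Sum>k\<in>UNIV. \<Sum>i<N. cnj (F i $ k) * G i $ k)"
    unfolding ip_def by (subst sum.swap) (simp add: mult.commute)
  also have "\<dots> = of_nat CARD('n)" by (simp add: one)
  finally show ?thesis .
qed

lemma dual_bound:
  fixes F G :: "nat \<Rightarrow> complex ^ 'n"
  assumes K: "K = \<real> \<or> K = UNIV" and D: "is_dual K N F G"
    and nF: "\<forall>i<N. (norm (F i))\<^sup>2 = 1 / q i" and qp: "\<forall>i<N. q i > 0"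
    and sumn: "(\<Sum>i<N. (norm (F i))\<^sup>2) = real CARD('n)"
    and M: "\<forall>i<N. q i * norm (F i) * norm (G i) \<le> M"
  shows "1 \<le> M"
proof -
  have tr: "(\<Sum>i<N. inner (G i) (F i)) = real CARD('n)"
    using arg_cong[OF trace_dual[OF K D], of Re] by (simp add: inner_ip Re_sum)
  have le: "norm (G i) * norm (F i) \<le> M * (norm (F i))\<^sup>2" if i: "i < N" for i
  proof -
    have "norm (G i) * norm (F i) = (q i * norm (F i) * norm (G i)) / q i"
      using qp[rule_format, OF i] by (simp add: field_simps)
    also have "\<dots> \<le> M / q i" using M qp i by (intro divide_right_mono) auto
    also have "\<dots> = M * (norm (F i))\<^sup>2" using nF i by simp
    finally show ?thesis .
  qed
  have "real CARD('n) \<le> (\<Sum>i<N. norm (G i) * norm (F i))"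
    unfolding tr[symmetric] by (intro sum_mono Cauchy_Schwarz_ineq2[THEN order_trans[OF abs_ge_self]])
  also have "\<dots> \<le> (\<Sum>i<N. M * (norm (F i))\<^sup>2)" using le by (intro sum_mono) auto
  also have "\<dots> = M * real CARD('n)" using sumn by (simp add: sum_distrib_left[symmetric])
  finally show ?thesis by simp
qed

lemma dual_unique:
  fixes F G :: "nat \<Rightarrow> complex ^ 'n"
  assumes K: "K = \<real> \<or> K = UNIV" and D: "is_dual K N F G"
    and nF: "\<forall>i<N. (norm (F i))\<^sup>2 = 1 / q i" and qp: "\<forall>i<N. q i > 0"
    and sumn: "(\<Sum>i<N. (norm (F i))\<^sup>2) = real CARD('n)"
    and M: "\<forall>i<N. q i * norm (F i) * norm (G i) \<le> 1"
  shows "\<forall>i<N. G i = F i"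
proof -
  have tr: "(\<Sum>i<N. inner (G i) (F i)) = real CARD('n)"
    using arg_cong[OF trace_dual[OF K D], of Re] by (simp add: inner_ip Re_sum)
  have le: "norm (G i) * norm (F i) \<le> (norm (F i))\<^sup>2" if i: "i < N" for i
  proof -
    have "norm (G i) * norm (F i) = (q i * norm (F i) * norm (G i)) / q i"
      using qp[rule_format, OF i] by (simp add: field_simps)
    also have "\<dots> \<le> 1 / q i" using M qp i by (intro divide_right_mono) auto
    also have "\<dots> = (norm (F i))\<^sup>2" using nF i by simp
    finally show ?thesis .
  qed
  have le2: "inner (G i) (F i) \<le> (norm (F i))\<^sup>2" if i: "i < N" for i
    using le[OF i] Cauchy_Schwarz_ineq2[THEN order_trans[OF abs_ge_self], of "G i" "F i"] by linarith
  have eq: "inner (G i) (F i) = (norm (F i))\<^sup>2" if i: "i < N" for i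
  proof (rule ccontr)
    assume "inner (G i) (F i) \<noteq> (norm (F i))\<^sup>2"
    hence "inner (G i) (F i) < (norm (F i))\<^sup>2" using le2[OF i] by simp
    hence "(\<Sum>i<N. inner (G i) (F i)) < (\<Sum>i<N. (norm (F i))\<^sup>2)"
      using le2 i by (intro sum_strict_mono_ex1) auto
    thus False using tr sumn by simp
  qed
  show ?thesis
  proof (intro allI impI)
    fix i assume i: "i < N"
    have Fp: "norm (F i) > 0"
    proof -
      have "(norm (F i))\<^sup>2 > 0" using nF qp i by simp
      thus ?thesis by (simp add: zero_less_power2)
    qed
    have a: "(norm (F i))\<^sup>2 \<le> norm (G i) * norm (F i)"
      using eq[OF i] Cauchy_Schwarz_ineq2[THEN order_trans[OF abs_ge_self], of "G i" "F i"] by linarith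
    have "norm (G i) = norm (F i)"
    proof -
      have "norm (F i) * norm (F i) \<le> norm (G i) * norm (F i)" using a by (simp add: power2_eq_square)
      hence "norm (F i) \<le> norm (G i)" using Fp by simp
      moreover have "norm (G i) * norm (F i) \<le> norm (F i) * norm (F i)" using le[OF i] by (simp add: power2_eq_square)
      hence "norm (G i) \<le> norm (F i)" using Fp by simp
      ultimately show ?thesis by simp
    qed
    hence "inner (G i) (G i) = inner (F i) (F i)" by (simp add: power2_norm_eq_inner[symmetric])
    hence "(norm (G i - F i))\<^sup>2 = 0"
      using eq[OF i] by (simp add: power2_norm_eq_inner inner_diff inner_commute)
    thus "G i = F i" by simp
  qed
qed

lemma is_dual_cong:
  assumes "\<forall>i<N. G i = G' i"
  shows "is_dual K N F G = is_dual K N F G'"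
proof -
  have a: "(\<Sum>i<N. (cmod (ip f (G i)))\<^sup>2) = (\<Sum>i<N. (cmod (ip f (G' i)))\<^sup>2)" for f
    using assms by (intro sum.cong) auto
  have b: "(\<Sum>i<N. ip f (F i) *s G i) = (\<Sum>i<N. ip f (F i) *s G' i)" for f
    using assms by (intro sum.cong) auto
  have c: "(\<Sum>i<N. ip f (G i) *s F i) = (\<Sum>i<N. ip f (G' i) *s F i)" for f
    using assms by (intro sum.cong) auto
  have d: "(\<forall>i<N. G i \<in> hspace K) = (\<forall>i<N. G' i \<in> hspace K)" using assms by auto
  show ?thesis unfolding is_dual_def is_frame_def a b c d ..
qed

lemma d_erasure_cong:
  assumes "\<forall>i<N. G i = G' i"
  shows "d_erasure K N q m F G = d_erasure K N q m F G'"
proof -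
  have "erasure_op q L F G = erasure_op q L F G'" if "L \<subseteq> {..<N}" for L
    unfolding erasure_op_def using assms that by (intro ext sum.cong) auto
  hence "{op_norm K (erasure_op q L F G) | L. L \<subseteq> {..<N} \<and> card L = m}
       = {op_norm K (erasure_op q L F G') | L. L \<subseteq> {..<N} \<and> card L = m}" by metis
  thus ?thesis unfolding d_erasure_def by simp
qed

lemma opt_dual_cong:
  assumes "\<forall>i<N. G i = G' i"
  shows "opt_dual K N q m F G = opt_dual K N q m F G'"
  by (induction m) (simp_all add: is_dual_cong[OF assms] d_erasure_cong[OF assms])

lemma opt_dual_1:
  "opt_dual K N q m F G \<Longrightarrow> 1 \<le> m \<Longrightarrow> opt_dual K N q 1 F G"
  by (induction m) (auto simp: le_Suc_eq)

theorem corollary4p2: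
  fixes K :: "complex set" and N :: nat and p :: "nat \<Rightarrow> real"
    and F :: "nat \<Rightarrow> complex ^ 'n"
  defines "q \<equiv> weight CARD('n) N p"
  assumes "K = \<real> \<or> K = UNIV"
    and "N \<ge> CARD('n)"
    and "prob_seq N p"
    and "\<forall>i<N. (\<Sum>j<N. p j) - p i \<noteq> 0"
    and "is_prob_uniform_parseval K N q F"
  shows "opt_dual K N q 1 F (canonical_dual K N F)
     \<and> (\<forall>G. opt_dual K N q 1 F G \<longrightarrow> (\<forall>i<N. G i = canonical_dual K N F i))
     \<and> (\<forall>m. 1 \<le> m \<and> m \<le> N \<longrightarrow> opt_dual K N q m F (canonical_dual K N F))"
proof -
  note K = assms(2)
  have ps: "\<forall>i<N. 0 \<le> p i \<and> p i \<le> 1" and s1: "(\<Sum>i<N. p i) = 1"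
    using assms(4) unfolding prob_seq_def by auto
  have N2: "N \<ge> 2"
  proof (rule ccontr)
    assume "\<not> N \<ge> 2"
    then consider "N = 0" | "N = 1" by linarith
    thus False
    proof cases
      case 1 thus False using s1 by simp
    next
      case 2 thus False using assms(5) by (metis lessThan_Suc lessThan_0 One_nat_def sum.insert finite.emptyI empty_iff sum.empty add.right_neutral diff_self zero_less_one)
    qed
  qed
  have qp: "\<forall>i<N. q i > 0"
  proof (intro allI impI)
    fix i assume i: "i < N"
    have "1 - p i > 0" using ps i assms(5) s1 by force
    moreover have "real N - 1 > 0" using N2 by simp
    ultimately show "q i > 0" unfolding q_def weight_def s1 by simp
  qed
  have P: "is_parseval K N F" and nF: "\<forall>i<N. (norm (F i))\<^sup>2 = 1 / q i"
    using assms(6) unfolding is_prob_uniform_parseval_def by auto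
  have Fh: "\<forall>i<N. F i \<in> hspace K" using P unfolding is_parseval_def by auto
  have SI: "\<forall>f\<in>hspace K. frame_op N F f = f" using parseval_frame_op[OF K P] by blast
  have dualF: "is_dual K N F F"
    unfolding is_dual_def is_frame_def
  proof (intro conjI)
    show "\<forall>i<N. F i \<in> hspace K" by (rule Fh)
    show "\<exists>A B. 0 < A \<and> A \<le> B \<and> (\<forall>f\<in>hspace K. A * (norm f)\<^sup>2 \<le> (\<Sum>i<N. (cmod (ip f (F i)))\<^sup>2) \<and>
        (\<Sum>i<N. (cmod (ip f (F i)))\<^sup>2) \<le> B * (norm f)\<^sup>2)"
      using P unfolding is_parseval_def by (intro exI[of _ 1]) auto
    show "\<forall>f\<in>hspace K. f = (\<Sum>i<N. ip f (F i) *s F i) \<and> f = (\<Sum>i<N. ip f (F i) *s F i)"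
      using SI unfolding frame_op_def by auto
  qed
  have CF: "\<forall>i<N. canonical_dual K N F i = F i"
  proof (intro allI impI)
    fix i assume i: "i < N"
    have Fi: "F i \<in> hspace K" using Fh i by auto
    hence im: "F i \<in> frame_op N F ` hspace K" using SI by (metis image_eqI)
    let ?x = "inv_into (hspace K) (frame_op N F) (F i)"
    have "?x \<in> hspace K" by (rule inv_into_into[OF im])
    hence "frame_op N F ?x = ?x" using SI by auto
    moreover have "frame_op N F ?x = F i" by (rule f_inv_into_f[OF im])
    ultimately show "canonical_dual K N F i = F i" unfolding canonical_dual_def by simp
  qed
  have sumn: "(\<Sum>i<N. (norm (F i))\<^sup>2) = real CARD('n)"
  proof -
    have "complex_of_real (\<Sum>i<N. (norm (F i))\<^sup>2) = (\<Sum>i<N. ip (F i) (F i))"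
      by (simp add: ip_self)
    also have "\<dots> = of_nat CARD('n)" by (rule trace_dual[OF K dualF])
    finally show ?thesis by (metis of_real_eq_iff of_real_of_nat_eq)
  qed
  have qnn: "\<forall>i<N. q i \<ge> 0" using qp by auto
  note d1 = d1_formula[OF K Fh qnn]
  have fin: "finite ((\<lambda>i. q i * norm (F i) * norm (G i)) ` {..<N})" for G :: "nat \<Rightarrow> complex ^ 'n"
    by simp
  have ne: "(\<lambda>i. q i * norm (F i) * norm (G i)) ` {..<N} \<noteq> {}" for G :: "nat \<Rightarrow> complex ^ 'n"
    using N2 by (simp add: lessThan_empty_iff)
  have d1F: "d_erasure K N q 1 F F = 1"
  proof -
    have "(\<lambda>i. q i * norm (F i) * norm (F i)) ` {..<N} = {1}"
    proof -
      have "q i * norm (F i) * norm (F i) = 1" if i: "i < N" for i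
        using nF qp[rule_format, OF i] i by (simp add: power2_eq_square mult.assoc)
      thus ?thesis using ne[of F] by auto
    qed
    thus ?thesis unfolding d1 by simp
  qed
  have lower: "1 \<le> d_erasure K N q 1 F G" if D: "is_dual K N F G" for G
  proof (rule dual_bound[OF K D nF qp sumn])
    show "\<forall>i<N. q i * norm (F i) * norm (G i) \<le> d_erasure K N q 1 F G"
      unfolding d1 using fin by auto
  qed
  have Inf1: "Inf {d_erasure K N q 1 F G' | G'. opt_dual K N q 0 F G'} = 1"
    by (rule cInf_eq_minimum) (use dualF d1F lower in auto)
  have optF1: "opt_dual K N q 1 F F"
    using dualF d1F Inf1 by (simp add: One_nat_def)
  have uniq: "\<forall>i<N. G i = F i" if O: "opt_dual K N q 1 F G" for G
  proof -
    have D: "is_dual K N F G" and dG: "d_erasure K N q 1 F G = 1"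
      using O Inf1 by (simp_all add: One_nat_def)
    have "\<forall>i<N. q i * norm (F i) * norm (G i) \<le> 1"
    proof (intro allI impI)
      fix i assume i: "i < N"
      have "q i * norm (F i) * norm (G i) \<le> Max ((\<lambda>i. q i * norm (F i) * norm (G i)) ` {..<N})"
        using i by (intro Max_ge) auto
      thus "q i * norm (F i) * norm (G i) \<le> 1" using dG unfolding d1 by simp
    qed
    thus ?thesis by (rule dual_unique[OF K D nF qp sumn])
  qed
  let ?C = "canonical_dual K N F"
  have CF': "\<forall>i<N. F i = ?C i" using CF by simp
  have optC1: "opt_dual K N q 1 F ?C" using optF1 opt_dual_cong[OF CF', of K q 1 F] by simp
  have all: "opt_dual K N q m F ?C" if "1 \<le> m" for m
    using that
  proof (induction m)
    case 0 thus ?case by simp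
  next
    case (Suc m)
    show ?case
    proof (cases "m = 0")
      case True thus ?thesis using optC1 by simp
    next
      case False
      hence IH: "opt_dual K N q m F ?C" using Suc by simp
      have "{d_erasure K N q (Suc m) F G' | G'. opt_dual K N q m F G'} = {d_erasure K N q (Suc m) F ?C}"
      proof (intro set_eqI iffI)
        fix x assume "x \<in> {d_erasure K N q (Suc m) F G' | G'. opt_dual K N q m F G'}"
        then obtain G' where G': "opt_dual K N q m F G'" and x: "x = d_erasure K N q (Suc m) F G'" by blast
        have "\<forall>i<N. G' i = F i" using False by (intro uniq opt_dual_1[OF G']) simp
        hence "\<forall>i<N. G' i = ?C i" using CF by simp
        hence "d_erasure K N q (Suc m) F G' = d_erasure K N q (Suc m) F ?C" by (rule d_erasure_cong)
        thus "x \<in> {d_erasure K N q (Suc m) F ?C}" using x by simp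
      next
        fix x assume "x \<in> {d_erasure K N q (Suc m) F ?C}"
        thus "x \<in> {d_erasure K N q (Suc m) F G' | G'. opt_dual K N q m F G'}" using IH by blast
      qed
      thus ?thesis using IH by simp
    qed
  qed
  show ?thesis
  proof (intro conjI allI impI)
    show "opt_dual K N q 1 F ?C" by (rule optC1)
  next
    fix G i assume "opt_dual K N q 1 F G" "i < N"
    thus "G i = ?C i" using uniq CF by simp
  next
    fix m :: nat assume "1 \<le> m \<and> m \<le> N"
    thus "opt_dual K N q m F ?C" using all by simp
  qed
qed

end
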